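(* Let $M\in\mathbb{R}^{m\times k}$ and let $P\in\mathbb{R}^{k\times k}$ be a projector along $\ker M$. Let $f:\mathbb{R}^m\times\mathbb{R}^n\to\mathbb{R}^m$ be continuous and strongly monotone with respect to $x$, and let $r:\mathbb{R}^n\to\mathbb{R}^k$ be continuous. Then there is a continuous function $g:\mathbb{R}^n\to\mathbb{R}^k$ such that for all $z\in\mathbb{R}^k$ and $y\in\mathbb{R}^n$: $M^\top f(Mz,y)+P^\top r(y)=0$ if and only if $Pz=g(y)$.
   Context: $f(x,y)$ is strongly monotone with respect to $x$ if there is $c>0$ such that $\langle f(x,y)-f(\bar x,y),x-\bar x\rangle\ge c\|x-\bar x\|^2$ for all $y\in\mathbb{R}^n$ and $x,\bar x\in\mathbb{R}^m$. A projector along $\ker M$ is a matrix $P$ with $P^2=P$ and $\ker P=\ker M$. *)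

theory Defs
  imports "HOL-Analysis.Analysis"
begin

definition strongly_monotone_x :: "(real^'m \<Rightarrow> real^'n \<Rightarrow> real^'m) \<Rightarrow> bool" where
  "strongly_monotone_x f \<longleftrightarrow>
     (\<exists>c>0. \<forall>y x x'. inner (f x y - f x' y) (x - x') \<ge> c * (norm (x - x'))\<^sup>2)"

definition projector_along_ker :: "real^'k^'k \<Rightarrow> real^'k^'m \<Rightarrow> bool" where
  "projector_along_ker P M \<longleftrightarrow>
     P ** P = P \<and> {v. P *v v = 0} = {v. M *v v = 0}"

end

theory Submission
  imports Defs
begin
lemma sm_zero:
  fixes H :: "'a::euclidean_space \<Rightarrow> 'a"
  assumes cont: "continuous_on UNIV H" and mu: "\<mu> > 0"
    and sm: "\<And>x y. inner (H x - H y) (x - y) \<ge> \<mu> * (norm (x - y))\<^sup>2"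
  shows "\<exists>x. H x = 0"
proof -
  define R where "R = norm (H 0) / \<mu> + 1"
  have R0: "R > 0" unfolding R_def using mu by (simp add: add_nonneg_pos)
  define T where "T = (\<lambda>x. closest_point (cball (0::'a) R) (x - H x))"
  have contT: "continuous_on (cball 0 R) T"
    unfolding T_def
    by (rule continuous_on_compose2[OF continuous_on_closest_point[of "cball 0 R" UNIV]])
       (use R0 in \<open>auto intro!: continuous_intros continuous_on_subset[OF cont]\<close>)
  have Tin: "T \<in> cball 0 R \<rightarrow> cball 0 R"
    unfolding T_def using R0 by (auto intro!: closest_point_in_set)
  obtain x where xin: "x \<in> cball 0 R" and fx: "T x = x"
    using brouwer_ball[OF R0 contT Tin] by blast
  have vi: "inner (H x) (z - x) \<ge> 0" if "z \<in> cball 0 R" for z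
  proof -
    have "inner ((x - H x) - T x) (z - T x) \<le> 0"
      unfolding T_def by (rule closest_point_dot) (use that in auto)
    then show ?thesis using fx by (simp add: inner_minus_left)
  qed
  have "inner (H x) x \<le> 0" using vi[of 0] R0 by (simp)
  moreover have "\<mu> * (norm x)\<^sup>2 \<le> inner (H x - H 0) x" using sm[of x 0] by simp
  moreover have "inner (H 0) x \<ge> - (norm (H 0) * norm x)"
    using norm_cauchy_schwarz[of "- H 0" x] by simp
  ultimately have "\<mu> * (norm x)\<^sup>2 \<le> norm (H 0) * norm x" by (simp add: inner_diff_left)
  hence "\<mu> * norm x \<le> norm (H 0)"
    by (cases "norm x = 0") (auto simp: power2_eq_square)
  hence nx: "norm x < R" unfolding R_def using mu by (simp add: field_simps)
  define t where "t = (R - norm x) / (norm (H x) + 1)"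
  have t0: "t > 0" unfolding t_def using nx by (simp add: add_nonneg_pos)
  have hp: "norm (H x) + 1 > 0" by (simp add: add_nonneg_pos)
  have "t * norm (H x) \<le> R - norm x"
  proof -
    have "t * norm (H x) \<le> t * (norm (H x) + 1)" using t0 by simp
    also have "\<dots> = R - norm x" unfolding t_def using hp by simp
    finally show ?thesis .
  qed
  hence "norm (x - t *\<^sub>R H x) \<le> R"
    using norm_triangle_ineq4[of x "t *\<^sub>R H x"] t0 by simp
  hence "inner (H x) ((x - t *\<^sub>R H x) - x) \<ge> 0" by (intro vi) simp
  hence "t * inner (H x) (H x) \<le> 0" by simp
  hence "inner (H x) (H x) \<le> 0" using t0 by (simp add: mult_le_0_iff)
  hence "H x = 0" by (metis inner_gt_zero_iff not_le)
  thus ?thesis by blast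
qed
lemma inner_transpose: "inner (transpose (A::real^'a^'b) *v x) v = inner x (A *v v)"
  by (simp add: dot_lmul_matrix)

lemma cont_comp2:
  assumes "continuous_on UNIV (\<lambda>(x, y). f x y)" "continuous_on UNIV a" "continuous_on UNIV b"
  shows "continuous_on UNIV (\<lambda>t. f (a t) (b t))"
proof -
  have "(\<lambda>t. f (a t) (b t)) = (\<lambda>(x, y). f x y) \<circ> (\<lambda>t. (a t, b t))" by auto
  moreover have "continuous_on UNIV (\<lambda>t. (a t, b t))"
    using assms by (intro continuous_on_Pair)
  ultimately show ?thesis
    using continuous_on_compose[of UNIV "\<lambda>t. (a t, b t)" "\<lambda>(x, y). f x y"] assms(1)
    by (metis (no_types, lifting) continuous_on_subset top_greatest)
qed

lemma cont_mv:
  fixes A :: "real^'a^'b"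
  shows "continuous_on S g \<Longrightarrow> continuous_on S (\<lambda>x. A *v g x)"
  by (rule bounded_linear.continuous_on[OF matrix_vector_mul_bounded_linear])

theorem lemma3:
  fixes M :: "real^'k^'m" and P :: "real^'k^'k"
    and f :: "real^'m \<Rightarrow> real^'n \<Rightarrow> real^'m" and r :: "real^'n \<Rightarrow> real^'k"
  assumes "projector_along_ker P M"
    and "continuous_on UNIV (\<lambda>(x, y). f x y)"
    and "strongly_monotone_x f"
    and "continuous_on UNIV r"
  shows "\<exists>g :: real^'n \<Rightarrow> real^'k. continuous_on UNIV g \<and>
           (\<forall>z y. (transpose M *v f (M *v z) y + transpose P *v r y = 0
                    \<longleftrightarrow> P *v z = g y))"
proof -
  have PP: "P ** P = P" and ker: "\<And>v. P *v v = 0 \<longleftrightarrow> M *v v = 0"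
    using assms(1) unfolding projector_along_ker_def by (auto simp: set_eq_iff)
  obtain c where c0: "c > 0"
    and mono: "\<And>y x x'. inner (f x y - f x' y) (x - x') \<ge> c * (norm (x - x'))\<^sup>2"
    using assms(3) unfolding strongly_monotone_x_def by blast
  have PPv: "P *v (P *v z) = P *v z" for z by (simp add: matrix_vector_mul_assoc PP)
  have MP: "M *v (P *v z) = M *v z" for z
  proof -
    have "P *v (z - P *v z) = 0" by (simp add: matrix_vector_mult_diff_distrib PPv)
    hence "M *v (z - P *v z) = 0" using ker by blast
    thus ?thesis by (simp add: matrix_vector_mult_diff_distrib)
  qed
  have MPm: "M ** P = M" unfolding matrix_eq
    by (simp add: MP flip: matrix_vector_mul_assoc)
  have PTM: "transpose P *v (transpose M *v w) = transpose M *v w" for w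
    by (metis matrix_vector_mul_assoc matrix_transpose_mul MPm)
  have PTP: "transpose P *v (transpose P *v w) = transpose P *v w" for w
    by (metis matrix_vector_mul_assoc matrix_transpose_mul PP)
  define q where "q z = z - P *v z" for z
  define G where "G y z = transpose M *v f (M *v z) y + transpose P *v r y" for y z
  define H where "H y z = G y z + (q z - transpose P *v q z)" for y z
  have GP: "G y (P *v z) = G y z" for y z unfolding G_def MP ..
  have qP: "q (P *v z) = 0" for z unfolding q_def PPv by simp
  have PTG: "transpose P *v G y z = G y z" for y z
    unfolding G_def by (simp only: matrix_vector_right_distrib PTM PTP)
  have qlin: "q a - q b = q (a - b)" for a b
    unfolding q_def by (simp add: matrix_vector_mult_diff_distrib)
  have qinner: "inner (q d - transpose P *v q d) d = (norm (q d))\<^sup>2" for d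
  proof -
    have "inner (q d - transpose P *v q d) d = inner (q d) d - inner (q d) (P *v d)"
      by (simp add: inner_diff_left inner_transpose dot_lmul_matrix)
    also have "\<dots> = inner (q d) (q d)" unfolding q_def by (simp add: inner_diff_right)
    finally show ?thesis by (simp add: power2_norm_eq_inner)
  qed
  define L where "L d = (M *v d, q d)" for d
  have linL: "linear L" unfolding L_def q_def
    by (rule linearI) (auto simp: matrix_vector_right_distrib matrix_vector_mult_diff_distrib
        matrix_vector_mult_scaleR scaleR_diff_right)
  have injL: "inj L"
  proof (rule injI)
    fix a b assume "L a = L b"
    hence "L (a - b) = 0" using linear_diff[OF linL] by simp
    hence h: "M *v (a - b) = 0" "q (a - b) = 0" unfolding L_def by (auto simp: zero_prod_def)
    hence "P *v (a - b) = 0" using ker by blast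
    with h(2) have "a - b = 0" unfolding q_def by simp
    thus "a = b" by simp
  qed
  obtain B where B0: "B > 0" and Bb: "\<And>d. B * norm d \<le> norm (L d)"
    using linear_inj_bounded_below_pos[OF linL injL] by blast
  define \<mu> where "\<mu> = min c 1 * B\<^sup>2"
  have mu0: "\<mu> > 0" unfolding \<mu>_def using c0 B0 by simp
  have Hsm: "inner (H y a - H y b) (a - b) \<ge> \<mu> * (norm (a - b))\<^sup>2" for y a b
  proof -
    let ?d = "a - b"
    have "inner (H y a - H y b) ?d = inner (f (M *v a) y - f (M *v b) y) (M *v a - M *v b)
           + inner (q ?d - transpose P *v q ?d) ?d"
    proof -
      have "H y a - H y b = transpose M *v (f (M *v a) y - f (M *v b) y) + (q ?d - transpose P *v q ?d)"
        unfolding H_def G_def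
        by (simp add: algebra_simps matrix_vector_mult_diff_distrib del: transpose_matrix_vector flip: qlin)
      thus ?thesis by (simp only: inner_add_left inner_transpose flip: matrix_vector_mult_diff_distrib)
    qed
    also have "\<dots> \<ge> c * (norm (M *v ?d))\<^sup>2 + (norm (q ?d))\<^sup>2"
      using mono[where x="M *v a" and x'="M *v b" and y=y] qinner[of ?d]
      by (simp add: matrix_vector_mult_diff_distrib)
    moreover have "c * (norm (M *v ?d))\<^sup>2 + (norm (q ?d))\<^sup>2 \<ge> min c 1 * ((norm (M *v ?d))\<^sup>2 + (norm (q ?d))\<^sup>2)"
    proof -
      have "min c 1 * (norm (M *v ?d))\<^sup>2 \<le> c * (norm (M *v ?d))\<^sup>2"
        by (rule mult_right_mono) auto
      moreover have "min c 1 * (norm (q ?d))\<^sup>2 \<le> 1 * (norm (q ?d))\<^sup>2"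
        by (rule mult_right_mono) auto
      ultimately show ?thesis by (simp add: distrib_left)
    qed
    moreover have "(norm (M *v ?d))\<^sup>2 + (norm (q ?d))\<^sup>2 = (norm (L ?d))\<^sup>2"
      unfolding L_def norm_Pair by simp
    moreover have "(norm (L ?d))\<^sup>2 \<ge> (B * norm ?d)\<^sup>2"
      using Bb[of ?d] B0 by (intro power_mono) auto
    moreover have "min c 1 * (B * norm ?d)\<^sup>2 \<le> min c 1 * (norm (L ?d))\<^sup>2"
      using c0 \<open>(norm (L ?d))\<^sup>2 \<ge> (B * norm ?d)\<^sup>2\<close> by (intro mult_left_mono) auto
    ultimately show ?thesis unfolding \<mu>_def
      by (simp add: power_mult_distrib mult.assoc)
  qed
  have fc: "continuous_on UNIV (\<lambda>t. f (a t) (b t))"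
    if "continuous_on UNIV a" "continuous_on UNIV b" for a :: "'z::topological_space \<Rightarrow> _" and b
    using cont_comp2[OF assms(2) that] .
  have contz: "continuous_on UNIV (H y)" for y
    unfolding H_def G_def q_def
    by (auto intro!: continuous_intros cont_mv fc simp del: transpose_matrix_vector)
  have conty: "continuous_on UNIV (\<lambda>y. H y z)" for z
    unfolding H_def G_def q_def
    by (auto intro!: continuous_intros cont_mv fc assms(4) simp del: transpose_matrix_vector)
  have ex: "\<exists>z. H y z = 0" for y
    by (rule sm_zero[OF contz mu0 Hsm])
  have uniq: "a = b" if "H y a = 0" "H y b = 0" for y a b
  proof -
    have "\<mu> * (norm (a - b))\<^sup>2 \<le> 0" using Hsm[where y=y and a=a and b=b] that by simp
    hence "(norm (a - b))\<^sup>2 \<le> 0" using mu0 by (simp add: mult_le_0_iff)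
    thus ?thesis by simp
  qed
  define g where "g y = (SOME z. H y z = 0)" for y
  have gz: "H y (g y) = 0" for y unfolding g_def using someI_ex[OF ex] .
  have zeroG: "G y z = 0 \<and> q z = 0" if "H y z = 0" for y z
  proof -
    have e: "G y z = - (q z - transpose P *v q z)" 
      unfolding eq_neg_iff_add_eq_0 using that unfolding H_def .
    have "transpose P *v G y z = - (transpose P *v q z - transpose P *v q z)"
      unfolding e by (simp only: matrix_vector_mult_diff_distrib linear_neg[OF matrix_vector_mul_linear] PTP)
    hence "G y z = 0" using PTG by simp
    hence "q z - transpose P *v q z = 0" using e by simp
    hence "(norm (q z))\<^sup>2 = 0" using qinner[of z] by simp
    with \<open>G y z = 0\<close> show ?thesis by simp
  qed
  have gc: "continuous_on UNIV g"
    unfolding continuous_on_iff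
  proof (intro ballI allI impI)
    fix y0 :: "real^'n" and e :: real
    assume "y0 \<in> UNIV" "e > 0"
    then obtain d where d0: "d > 0"
      and dd: "\<And>y. dist y y0 < d \<Longrightarrow> dist (H y (g y0)) (H y0 (g y0)) < e * \<mu>"
      using conty[of "g y0"] mu0 unfolding continuous_on_iff by (metis UNIV_I mult_pos_pos)
    show "\<exists>d>0. \<forall>x'\<in>UNIV. dist x' y0 < d \<longrightarrow> dist (g x') (g y0) < e"
    proof (intro exI[of _ d] conjI ballI impI d0)
      fix y assume "dist y y0 < d"
      hence h: "norm (H y (g y0)) < e * \<mu>" using dd gz[of y0] by (simp add: dist_norm)
      have "\<mu> * (norm (g y - g y0))\<^sup>2 \<le> inner (H y (g y) - H y (g y0)) (g y - g y0)"
        by (rule Hsm)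
      also have "\<dots> = inner (- H y (g y0)) (g y - g y0)" using gz[of y] by simp
      also have "\<dots> \<le> norm (H y (g y0)) * norm (g y - g y0)"
        using norm_cauchy_schwarz[of "- H y (g y0)" "g y - g y0"] by simp
      finally have "\<mu> * norm (g y - g y0) \<le> norm (H y (g y0))"
        by (cases "norm (g y - g y0) = 0") (auto simp: power2_eq_square)
      hence "\<mu> * norm (g y - g y0) < \<mu> * e" using h by (simp add: mult.commute)
      hence "norm (g y - g y0) < e" using mu0 by simp
      thus "dist (g y) (g y0) < e" by (simp add: dist_norm)
    qed
  qed
  show ?thesis
  proof (intro exI[of _ g] conjI gc allI)
    fix z y
    show "transpose M *v f (M *v z) y + transpose P *v r y = 0 \<longleftrightarrow> P *v z = g y"
    proof
      assume "transpose M *v f (M *v z) y + transpose P *v r y = 0"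
      hence "G y (P *v z) = 0" unfolding GP by (simp add: G_def del: transpose_matrix_vector)
      hence "H y (P *v z) = 0" unfolding H_def qP by simp
      thus "P *v z = g y" using uniq gz by blast
    next
      assume "P *v z = g y"
      hence "G y z = 0" using GP[of y z] zeroG[OF gz[of y]] by simp
      thus "transpose M *v f (M *v z) y + transpose P *v r y = 0"
        by (simp add: G_def del: transpose_matrix_vector)
    qed
  qed
qed
end
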